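(* Let $(X,\tau)$ be an extended locally convex space with finest locally convex topology $\tau_F$, and let $Y$ be a linear subspace of $X$. Then the relative topology $\tau_F|_Y$ is the finest locally convex topology of the extended locally convex space $(Y,\tau|_Y)$. Moreover, $(Y,\tau_F|_Y)^*=(Y,\tau|_Y)^*$.
   Context: An extended seminorm on a vector space $X$ over $\mathbb{R}$ or $\mathbb{C}$ is a map $\rho:X\to[0,\infty]$ with $\rho(\alpha x)=|\alpha|\rho(x)$ and $\rho(x+y)\le\rho(x)+\rho(y)$. An extended locally convex space $(X,\tau)$ is a vector space with the topology induced by a family $\{\rho_i\}$ of extended seminorms (neighborhood base at $x_0$: $\{x:\max_{i\in J}\rho_i(x-x_0)<\varepsilon\}$, $J$ finite, $\varepsilon>0$). A locally convex topology is one induced in this way by finite-valued seminorms. The finest locally convex topology of an elcs $(X,\tau)$ is the locally convex topology $\tau_F\subseteq\tau$ on $X$ such that every locally convex topology $\sigma\subseteq\tau$ on $X$ satisfies $\sigma\subseteq\tau_F$. For a topological vector-space-like structure $(Z,\sigma)$, $(Z,\sigma)^*$ denotes the set of $\sigma$-continuous linear functionals on $Z$. *)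

theory Defs
  imports "HOL-Analysis.Analysis"
begin

text \<open>All notions are relativised to a carrier set S (a linear subspace of the
ambient vector space 'v over the scalar field 'k, with scalar multiplication sc).
The scalar field is a real_normed_field (in the library: real or complex).\<close>

definition ext_seminorm ::
  "('k::real_normed_field \<Rightarrow> 'v::ab_group_add \<Rightarrow> 'v) \<Rightarrow> 'v set \<Rightarrow> ('v \<Rightarrow> ennreal) \<Rightarrow> bool" where
  "ext_seminorm sc S \<rho> \<longleftrightarrow>
     (\<forall>a. \<forall>x\<in>S. \<rho> (sc a x) = ennreal (norm a) * \<rho> x) \<and>
     (\<forall>x\<in>S. \<forall>y\<in>S. \<rho> (x + y) \<le> \<rho> x + \<rho> y)"

definition fin_seminorm ::
  "('k::real_normed_field \<Rightarrow> 'v::ab_group_add \<Rightarrow> 'v) \<Rightarrow> 'v set \<Rightarrow> ('v \<Rightarrow> ennreal) \<Rightarrow> bool" where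
  "fin_seminorm sc S \<rho> \<longleftrightarrow> ext_seminorm sc S \<rho> \<and> (\<forall>x\<in>S. \<rho> x < \<infinity>)"

definition seminorm_topology :: "'v::ab_group_add set \<Rightarrow> ('v \<Rightarrow> ennreal) set \<Rightarrow> 'v topology" where
  "seminorm_topology S P = topology (\<lambda>U. U \<subseteq> S \<and>
     (\<forall>x0\<in>U. \<exists>J \<epsilon>. finite J \<and> J \<subseteq> P \<and> (\<epsilon>::real) > 0 \<and>
        {x\<in>S. \<forall>\<rho>\<in>J. \<rho> (x - x0) < ennreal \<epsilon>} \<subseteq> U))"

definition elcs_topology ::
  "('k::real_normed_field \<Rightarrow> 'v::ab_group_add \<Rightarrow> 'v) \<Rightarrow> 'v set \<Rightarrow> 'v topology \<Rightarrow> bool" where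
  "elcs_topology sc S \<tau> \<longleftrightarrow>
     (\<exists>P. (\<forall>\<rho>\<in>P. ext_seminorm sc S \<rho>) \<and> \<tau> = seminorm_topology S P)"

definition lc_topology ::
  "('k::real_normed_field \<Rightarrow> 'v::ab_group_add \<Rightarrow> 'v) \<Rightarrow> 'v set \<Rightarrow> 'v topology \<Rightarrow> bool" where
  "lc_topology sc S \<sigma> \<longleftrightarrow>
     (\<exists>P. (\<forall>\<rho>\<in>P. fin_seminorm sc S \<rho>) \<and> \<sigma> = seminorm_topology S P)"

definition coarser :: "'a topology \<Rightarrow> 'a topology \<Rightarrow> bool" where
  "coarser \<sigma> \<tau> \<longleftrightarrow> (\<forall>U. openin \<sigma> U \<longrightarrow> openin \<tau> U)"

definition finest_lc_topology ::
  "('k::real_normed_field \<Rightarrow> 'v::ab_group_add \<Rightarrow> 'v) \<Rightarrow> 'v set \<Rightarrow> 'v topology \<Rightarrow> 'v topology \<Rightarrow> bool" where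
  "finest_lc_topology sc S \<tau> \<tau>F \<longleftrightarrow>
     lc_topology sc S \<tau>F \<and> coarser \<tau>F \<tau> \<and>
     (\<forall>\<sigma>. lc_topology sc S \<sigma> \<and> coarser \<sigma> \<tau> \<longrightarrow> coarser \<sigma> \<tau>F)"

text \<open>Topological dual of (S, sigma): continuous linear functionals on S
(represented extensionally, i.e. undefined outside S).\<close>
definition dual_space ::
  "('k::real_normed_field \<Rightarrow> 'v::ab_group_add \<Rightarrow> 'v) \<Rightarrow> 'v set \<Rightarrow> 'v topology \<Rightarrow> ('v \<Rightarrow> 'k) set" where
  "dual_space sc S \<sigma> = {f. f \<in> extensional S \<and>
     (\<forall>x\<in>S. \<forall>y\<in>S. f (x + y) = f x + f y) \<and>
     (\<forall>a. \<forall>x\<in>S. f (sc a x) = a * f x) \<and>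
     continuous_map \<sigma> euclidean f}"

end

theory Submission
  imports Defs
begin


lemma st_istop:
  "istopology (\<lambda>U. U \<subseteq> S \<and>
     (\<forall>x0\<in>U. \<exists>J \<epsilon>. finite J \<and> J \<subseteq> P \<and> (\<epsilon>::real) > 0 \<and>
        {x\<in>S. \<forall>\<rho>\<in>J. \<rho> (x - x0) < ennreal \<epsilon>} \<subseteq> U))"
  unfolding istopology_def
proof (rule conjI; intro allI impI)
  fix U V assume U: "U \<subseteq> S \<and>
     (\<forall>x0\<in>U. \<exists>J \<epsilon>. finite J \<and> J \<subseteq> P \<and> (\<epsilon>::real) > 0 \<and>
        {x\<in>S. \<forall>\<rho>\<in>J. \<rho> (x - x0) < ennreal \<epsilon>} \<subseteq> U)"
   and V: "V \<subseteq> S \<and>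
     (\<forall>x0\<in>V. \<exists>J \<epsilon>. finite J \<and> J \<subseteq> P \<and> (\<epsilon>::real) > 0 \<and>
        {x\<in>S. \<forall>\<rho>\<in>J. \<rho> (x - x0) < ennreal \<epsilon>} \<subseteq> V)"
  show "U \<inter> V \<subseteq> S \<and>
     (\<forall>x0\<in>U \<inter> V. \<exists>J \<epsilon>. finite J \<and> J \<subseteq> P \<and> (\<epsilon>::real) > 0 \<and>
        {x\<in>S. \<forall>\<rho>\<in>J. \<rho> (x - x0) < ennreal \<epsilon>} \<subseteq> U \<inter> V)"
  proof (intro conjI ballI)
    show "U \<inter> V \<subseteq> S" using U by blast
    fix x0 assume "x0 \<in> U \<inter> V"
    then have "x0 \<in> U" "x0 \<in> V" by auto
    obtain J1 e1 where 1: "finite J1" "J1 \<subseteq> P" "(e1::real) > 0"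
        "{x\<in>S. \<forall>\<rho>\<in>J1. \<rho> (x - x0) < ennreal e1} \<subseteq> U"
      using U \<open>x0 \<in> U\<close> by meson
    obtain J2 e2 where 2: "finite J2" "J2 \<subseteq> P" "(e2::real) > 0"
        "{x\<in>S. \<forall>\<rho>\<in>J2. \<rho> (x - x0) < ennreal e2} \<subseteq> V"
      using V \<open>x0 \<in> V\<close> by meson
    have "{x\<in>S. \<forall>\<rho>\<in>J1 \<union> J2. \<rho> (x - x0) < ennreal (min e1 e2)} \<subseteq> U \<inter> V"
    proof
      fix x assume x: "x \<in> {x\<in>S. \<forall>\<rho>\<in>J1 \<union> J2. \<rho> (x - x0) < ennreal (min e1 e2)}"
      have a: "ennreal (min e1 e2) \<le> ennreal e1" "ennreal (min e1 e2) \<le> ennreal e2"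
        by (auto intro: ennreal_leI)
      have "x \<in> U" using 1(4) x a(1) by (auto intro: less_le_trans)
      moreover have "x \<in> V" using 2(4) x a(2) by (auto intro: less_le_trans)
      ultimately show "x \<in> U \<inter> V" by blast
    qed
    then show "\<exists>J \<epsilon>. finite J \<and> J \<subseteq> P \<and> (\<epsilon>::real) > 0 \<and>
        {x\<in>S. \<forall>\<rho>\<in>J. \<rho> (x - x0) < ennreal \<epsilon>} \<subseteq> U \<inter> V"
      using 1 2 by (intro exI[of _ "J1 \<union> J2"] exI[of _ "min e1 e2"]) auto
  qed
next
  fix K :: "'a set set"
  assume K: "\<forall>U\<in>K. U \<subseteq> S \<and>
     (\<forall>x0\<in>U. \<exists>J \<epsilon>. finite J \<and> J \<subseteq> P \<and> (\<epsilon>::real) > 0 \<and>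
        {x\<in>S. \<forall>\<rho>\<in>J. \<rho> (x - x0) < ennreal \<epsilon>} \<subseteq> U)"
  show "\<Union>K \<subseteq> S \<and>
     (\<forall>x0\<in>\<Union>K. \<exists>J \<epsilon>. finite J \<and> J \<subseteq> P \<and> (\<epsilon>::real) > 0 \<and>
        {x\<in>S. \<forall>\<rho>\<in>J. \<rho> (x - x0) < ennreal \<epsilon>} \<subseteq> \<Union>K)"
  proof (intro conjI ballI)
    show "\<Union>K \<subseteq> S" using K by blast
    fix x0 assume "x0 \<in> \<Union>K"
    then obtain U where "U \<in> K" "x0 \<in> U" by blast
    then obtain J e where "finite J" "J \<subseteq> P" "(e::real) > 0"
        "{x\<in>S. \<forall>\<rho>\<in>J. \<rho> (x - x0) < ennreal e} \<subseteq> U" using K by meson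
    then show "\<exists>J \<epsilon>. finite J \<and> J \<subseteq> P \<and> (\<epsilon>::real) > 0 \<and>
        {x\<in>S. \<forall>\<rho>\<in>J. \<rho> (x - x0) < ennreal \<epsilon>} \<subseteq> \<Union>K"
      using \<open>U \<in> K\<close> by blast
  qed
qed

lemma openin_st:
  "openin (seminorm_topology S P) U \<longleftrightarrow> U \<subseteq> S \<and>
     (\<forall>x0\<in>U. \<exists>J \<epsilon>. finite J \<and> J \<subseteq> P \<and> (\<epsilon>::real) > 0 \<and>
        {x\<in>S. \<forall>\<rho>\<in>J. \<rho> (x - x0) < ennreal \<epsilon>} \<subseteq> U)"
  unfolding seminorm_topology_def topology_inverse'[OF st_istop] by (rule refl)

lemma topspace_st: "topspace (seminorm_topology S P) = S"
proof -
  have "openin (seminorm_topology S P) S"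
    unfolding openin_st by (intro conjI ballI exI[of _ "{}"] exI[of _ "1::real"]) auto
  moreover have "\<And>U. openin (seminorm_topology S P) U \<Longrightarrow> U \<subseteq> S"
    unfolding openin_st by blast
  ultimately show ?thesis by (metis openin_subset subset_antisym openin_topspace)
qed

lemma nb1_open:
  assumes "x0 \<in> S" "\<rho> \<in> P" "\<forall>x\<in>S. \<forall>y\<in>S. x - y \<in> S"
    "\<forall>x\<in>S. \<forall>y\<in>S. \<rho> (x + y) \<le> \<rho> x + \<rho> y"
  shows "openin (seminorm_topology S P) {x\<in>S. \<rho> (x - x0) < ennreal e}"
  unfolding openin_st
proof (intro conjI ballI)
  fix x1 assume x1: "x1 \<in> {x\<in>S. \<rho> (x - x0) < ennreal e}"
  then obtain r where r: "\<rho> (x1 - x0) = ennreal r" "0 \<le> r" "r < e"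
    by (metis (no_types, lifting) ennreal_cases ennreal_less_iff ennreal_less_zero_iff
        linorder_not_le mem_Collect_eq top.extremum_strict)
  have "{x\<in>S. \<forall>\<rho>'\<in>{\<rho>}. \<rho>' (x - x1) < ennreal (e - r)} \<subseteq> {x\<in>S. \<rho> (x - x0) < ennreal e}"
  proof safe
    fix x assume x: "x \<in> S" "\<forall>\<rho>'\<in>{\<rho>}. \<rho>' (x - x1) < ennreal (e - r)"
    have "\<rho> (x - x0) = \<rho> ((x - x1) + (x1 - x0))" by (simp add: algebra_simps)
    also have "\<dots> \<le> \<rho> (x - x1) + \<rho> (x1 - x0)"
      by (rule assms(4)[rule_format]) (use assms(1,3) x x1 in auto)
    also have "\<dots> < ennreal (e - r) + ennreal r"
      proof -
      have "ennreal r + \<rho> (x - x1) < ennreal r + ennreal (e - r)"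
        using x by (simp add: ennreal_add_left_cancel_less)
      then show ?thesis by (metis add.commute r(1))
    qed
    also have "\<dots> = ennreal e" using r by (simp flip: ennreal_plus)
    finally show "\<rho> (x - x0) < ennreal e" .
  qed
  then show "\<exists>J \<epsilon>. finite J \<and> J \<subseteq> P \<and> (\<epsilon>::real) > 0 \<and>
        {x\<in>S. \<forall>\<rho>\<in>J. \<rho> (x - x1) < ennreal \<epsilon>} \<subseteq> {x\<in>S. \<rho> (x - x0) < ennreal e}"
    using assms r by (intro exI[of _ "{\<rho>}"] exI[of _ "e - r"]) auto
qed auto

lemma nbJ_open:
  assumes "x0 \<in> S" "J \<subseteq> P" "finite J" "\<forall>x\<in>S. \<forall>y\<in>S. x - y \<in> S"
    "\<forall>\<rho>\<in>P. \<forall>x\<in>S. \<forall>y\<in>S. \<rho> (x + y) \<le> \<rho> x + \<rho> y"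
  shows "openin (seminorm_topology S P) {x\<in>S. \<forall>\<rho>\<in>J. \<rho> (x - x0) < ennreal e}"
proof (cases "J = {}")
  case True
  have "openin (seminorm_topology S P) S"
    using openin_topspace[of "seminorm_topology S P"] by (simp add: topspace_st)
  then show ?thesis using True by simp
next
  case False
  have eq: "{x\<in>S. \<forall>\<rho>\<in>J. \<rho> (x - x0) < ennreal e} = \<Inter>((\<lambda>\<rho>. {x\<in>S. \<rho> (x - x0) < ennreal e}) ` J)"
    using False by auto
  show ?thesis unfolding eq
    by (rule openin_Inter) (use assms False nb1_open[of x0 S] in auto)
qed


lemma proj_exists:
  assumes "vector_space sc" "module.subspace sc M"
  shows "\<exists>g. range g \<subseteq> M \<and> (\<forall>x y. g (x + y) = g x + g y) \<and> (\<forall>a x. g (sc a x) = sc a (g x))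
     \<and> (\<forall>v\<in>M. g v = v)"
proof -
  interpret vector_space_pair sc sc using assms(1) by (simp add: vector_space_pair_def)
  obtain g where g: "range g \<subseteq> M" "Vector_Spaces.linear sc sc g" "\<forall>v\<in>M. g v = v"
    using linear_exists_left_inverse_on[of id M] vs1.linear_id assms(2) by auto
  then have "module_hom sc sc g" by (simp add: module_hom_iff_linear)
  then show ?thesis using g by (intro exI[of _ g]) (auto simp: module_hom.add module_hom.scale)
qed

lemma ennreal_le_Inf_add:
  fixes z :: ennreal
  assumes "\<And>a b. a \<in> A \<Longrightarrow> b \<in> B \<Longrightarrow> z \<le> a + b"
  shows "z \<le> Inf A + Inf B"
proof (rule ennreal_le_epsilon)
  fix e :: real assume fin: "Inf A + Inf B < top" and e: "0 < e"
  have "Inf A < top" "Inf B < top" using fin by (auto simp: top_unique)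
  then have ne: "\<exists>x\<in>A. x \<noteq> top" "\<exists>x\<in>B. x \<noteq> top"
    by (metis Inf_less_iff less_irrefl)+
  then have "Inf A < Inf A + ennreal (e/2)" "Inf B < Inf B + ennreal (e/2)"
    using e ne by (auto simp: ennreal_add_left_cancel_less)
  then obtain a b where ab: "a \<in> A" "a < Inf A + ennreal (e/2)" "b \<in> B" "b < Inf B + ennreal (e/2)"
    by (meson Inf_less_iff)
  have "z \<le> a + b" using assms ab by blast
  also have "\<dots> \<le> (Inf A + ennreal (e/2)) + (Inf B + ennreal (e/2))"
    using ab by (intro add_mono) auto
  also have "\<dots> = Inf A + Inf B + ennreal e"
    using e by (simp add: ac_simps flip: ennreal_plus)
  finally show "z \<le> Inf A + Inf B + ennreal e" .
qed

lemma ennreal_le_mult_Inf: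
  fixes z :: ennreal
  assumes "t > 0" "\<And>a. a \<in> A \<Longrightarrow> z \<le> ennreal t * a"
  shows "z \<le> ennreal t * Inf A"
proof -
  have inv: "ennreal (1/t) * ennreal t = 1" using assms(1)
    by (simp flip: ennreal_mult)
  have "ennreal (1/t) * z \<le> Inf A"
  proof (rule Inf_greatest)
    fix a assume "a \<in> A"
    then have "ennreal (1/t) * z \<le> ennreal (1/t) * (ennreal t * a)"
      using assms by (intro mult_left_mono) auto
    also have "\<dots> = a" using assms(1) by (simp add: mult.assoc[symmetric] ennreal_mult[symmetric])
    finally show "ennreal (1/t) * z \<le> a" .
  qed
  then have "ennreal t * (ennreal (1/t) * z) \<le> ennreal t * Inf A" by (intro mult_left_mono) auto
  moreover have "ennreal t * (ennreal (1/t) * z) = z" using assms(1)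
    by (simp add: mult.assoc[symmetric] ennreal_mult[symmetric])
  ultimately show ?thesis by simp
qed


lemma sub_st:
  assumes "Y \<subseteq> S" "\<forall>x\<in>S. \<forall>y\<in>S. x - y \<in> S" "\<forall>x\<in>Y. \<forall>y\<in>Y. x - y \<in> Y"
    "\<forall>\<rho>\<in>P. \<rho> 0 = 0" "\<forall>\<rho>\<in>P. \<forall>x\<in>S. \<forall>y\<in>S. \<rho> (x + y) \<le> \<rho> x + \<rho> y"
  shows "subtopology (seminorm_topology S P) Y = seminorm_topology Y P"
  unfolding topology_eq
proof (intro allI iffI)
  fix U assume "openin (subtopology (seminorm_topology S P) Y) U"
  then obtain V where V: "openin (seminorm_topology S P) V" "U = V \<inter> Y"
    by (auto simp: openin_subtopology)
  show "openin (seminorm_topology Y P) U"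
    unfolding openin_st
  proof (intro conjI ballI)
    show "U \<subseteq> Y" using V by blast
    fix x0 assume "x0 \<in> U"
    then obtain J e where "finite J" "J \<subseteq> P" "(e::real) > 0"
        "{x\<in>S. \<forall>\<rho>\<in>J. \<rho> (x - x0) < ennreal e} \<subseteq> V"
      using V unfolding openin_st by blast
    then show "\<exists>J \<epsilon>. finite J \<and> J \<subseteq> P \<and> (\<epsilon>::real) > 0 \<and>
        {x\<in>Y. \<forall>\<rho>\<in>J. \<rho> (x - x0) < ennreal \<epsilon>} \<subseteq> U"
      using V(2) assms(1) by (intro exI[of _ J] exI[of _ e]) auto
  qed
next
  fix U assume U: "openin (seminorm_topology Y P) U"
  show "openin (subtopology (seminorm_topology S P) Y) U"
  proof (subst openin_subopen, intro ballI)
    fix x0 assume "x0 \<in> U"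
    then obtain J e where J: "finite J" "J \<subseteq> P" "(e::real) > 0"
        "{x\<in>Y. \<forall>\<rho>\<in>J. \<rho> (x - x0) < ennreal e} \<subseteq> U"
      using U unfolding openin_st by blast
    have x0: "x0 \<in> Y" using U \<open>x0 \<in> U\<close> unfolding openin_st by blast
    have op: "openin (seminorm_topology S P) {x\<in>S. \<forall>\<rho>\<in>J. \<rho> (x - x0) < ennreal e}"
      by (rule nbJ_open) (use J x0 assms in auto)
    have eq: "{x\<in>Y. \<forall>\<rho>\<in>J. \<rho> (x - x0) < ennreal e} = {x\<in>S. \<forall>\<rho>\<in>J. \<rho> (x - x0) < ennreal e} \<inter> Y"
      using assms(1) by auto
    have "x0 \<in> {x\<in>Y. \<forall>\<rho>\<in>J. \<rho> (x - x0) < ennreal e}" proof -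
      have "\<forall>\<rho>\<in>J. \<rho> 0 = 0" using J(2) assms(4) by blast
      then show ?thesis using x0 J(3) by auto
    qed
    then show "\<exists>T. openin (subtopology (seminorm_topology S P) Y) T \<and> x0 \<in> T \<and> T \<subseteq> U"
      using J(4) op eq by (intro exI[of _ "{x\<in>Y. \<forall>\<rho>\<in>J. \<rho> (x - x0) < ennreal e}"])
        (auto simp: openin_subtopology)
  qed
qed

lemma sn_zero:
  assumes "vector_space sc" "ext_seminorm sc S \<rho>" "0 \<in> S"
  shows "\<rho> 0 = 0"
proof -
  interpret vector_space sc by fact
  have "\<rho> (sc 0 0) = ennreal (norm (0::'a)) * \<rho> 0" using assms unfolding ext_seminorm_def by blast
  then show ?thesis by simp
qed

lemma sub_diff: "vector_space sc \<Longrightarrow> module.subspace sc Y \<Longrightarrow> \<forall>x\<in>Y. \<forall>y\<in>Y. x - y \<in> Y"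
  by (metis module.subspace_diff module_iff_vector_space)

lemma sub_zero: "vector_space sc \<Longrightarrow> module.subspace sc Y \<Longrightarrow> 0 \<in> Y"
  by (metis module.subspace_0 module_iff_vector_space)


lemma extend_seminorm:
  fixes sc :: "'k::real_normed_field \<Rightarrow> 'v::ab_group_add \<Rightarrow> 'v"
  assumes VS: "vector_space sc" and Ysub: "module.subspace sc Y"
    and p: "fin_seminorm sc Y p" and r: "ext_seminorm sc UNIV r" and dom: "\<forall>y\<in>Y. p y \<le> r y"
  shows "\<exists>p2. fin_seminorm sc UNIV p2 \<and> (\<forall>y\<in>Y. p2 y = p y) \<and> (\<forall>x. p2 x \<le> r x)"
proof -
  interpret vector_space sc by fact
  have Y0: "0 \<in> Y" and Yd: "\<And>x y. x \<in> Y \<Longrightarrow> y \<in> Y \<Longrightarrow> x - y \<in> Y"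
    and Ya: "\<And>x y. x \<in> Y \<Longrightarrow> y \<in> Y \<Longrightarrow> x + y \<in> Y"
    and Ys: "\<And>a x. x \<in> Y \<Longrightarrow> sc a x \<in> Y"
    using Ysub subspace_0 subspace_diff subspace_add subspace_scale by blast+
  have ph: "\<And>a x. x \<in> Y \<Longrightarrow> p (sc a x) = ennreal (norm a) * p x"
    and pt: "\<And>x y. x \<in> Y \<Longrightarrow> y \<in> Y \<Longrightarrow> p (x + y) \<le> p x + p y"
    and pf: "\<And>x. x \<in> Y \<Longrightarrow> p x < top"
    using p unfolding fin_seminorm_def ext_seminorm_def by auto
  have rh: "\<And>a x. r (sc a x) = ennreal (norm a) * r x"
    and rt: "\<And>x y. r (x + y) \<le> r x + r y"
    using r unfolding ext_seminorm_def by auto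
  have r0: "r 0 = 0" using sn_zero[OF VS r] by simp
  have p0: "p 0 = 0" using sn_zero[OF VS fin_seminorm_def[THEN iffD1, OF p, THEN conjunct1] Y0] .
  define p1 where "p1 x = Inf ((\<lambda>y. p y + r (x - y)) ` Y)" for x
  have p1_le_r: "p1 x \<le> r x" for x
    unfolding p1_def by (rule INF_lower2[OF Y0]) (simp add: p0)
  have p1_Y: "p1 y = p y" if "y \<in> Y" for y
  proof (rule antisym)
    show "p1 y \<le> p y" unfolding p1_def by (rule INF_lower2[OF that]) (simp add: r0)
    show "p y \<le> p1 y" unfolding p1_def
    proof (rule INF_greatest)
      fix z assume z: "z \<in> Y"
      have "p y = p (z + (y - z))" by simp
      also have "\<dots> \<le> p z + p (y - z)" using pt z Yd that by blast
      also have "\<dots> \<le> p z + r (y - z)" using dom Yd z that by (intro add_left_mono) auto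
      finally show "p y \<le> p z + r (y - z)" .
    qed
  qed
  have p1_add: "p1 (x1 + x2) \<le> p1 x1 + p1 x2" for x1 x2
    unfolding p1_def
  proof (rule ennreal_le_Inf_add)
    fix a b assume a: "a \<in> (\<lambda>y. p y + r (x1 - y)) ` Y" and b: "b \<in> (\<lambda>y. p y + r (x2 - y)) ` Y"
    then obtain y1 y2 where y: "y1 \<in> Y" "y2 \<in> Y" "a = p y1 + r (x1 - y1)" "b = p y2 + r (x2 - y2)"
      by blast
    have "Inf ((\<lambda>y. p y + r (x1 + x2 - y)) ` Y) \<le> p (y1 + y2) + r (x1 + x2 - (y1 + y2))"
      by (rule INF_lower) (use y Ya in auto)
    also have "\<dots> \<le> (p y1 + p y2) + (r (x1 - y1) + r (x2 - y2))"
    proof (rule add_mono)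
      show "p (y1 + y2) \<le> p y1 + p y2" using pt y by blast
      have eq: "x1 + x2 - (y1 + y2) = (x1 - y1) + (x2 - y2)" by (simp add: algebra_simps)
      show "r (x1 + x2 - (y1 + y2)) \<le> r (x1 - y1) + r (x2 - y2)" unfolding eq by (rule rt)
    qed
    also have "\<dots> = a + b" using y by (simp add: ac_simps)
    finally show "Inf ((\<lambda>y. p y + r (x1 + x2 - y)) ` Y) \<le> a + b" .
  qed
  have p1_0: "p1 0 = 0" using p1_le_r[of 0] r0 by simp
  have p1_sc_le: "p1 (sc a x) \<le> ennreal (norm a) * p1 x" for a x
  proof (cases "a = 0")
    case True
    then show ?thesis using p1_0 by simp
  next
    case False
    then have na: "norm a > 0" by simp
    show ?thesis unfolding p1_def
    proof (rule ennreal_le_mult_Inf[OF na])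
      fix e assume "e \<in> (\<lambda>y. p y + r (x - y)) ` Y"
      then obtain y where y: "y \<in> Y" "e = p y + r (x - y)" by blast
      have "Inf ((\<lambda>y. p y + r (sc a x - y)) ` Y) \<le> p (sc a y) + r (sc a x - sc a y)"
        by (rule INF_lower) (use y Ys in auto)
      also have "\<dots> = ennreal (norm a) * e"
        using y by (simp add: ph rh scale_right_diff_distrib[symmetric] distrib_left)
      finally show "Inf ((\<lambda>y. p y + r (sc a x - y)) ` Y) \<le> ennreal (norm a) * e" .
    qed
  qed
  have p1_sc: "p1 (sc a x) = ennreal (norm a) * p1 x" for a x
  proof (cases "a = 0")
    case True
    then show ?thesis using p1_0 by simp
  next
    case False
    have "p1 x = p1 (sc (inverse a) (sc a x))" using False by simp
    also have "\<dots> \<le> ennreal (norm (inverse a)) * p1 (sc a x)" by (rule p1_sc_le)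
    finally have "ennreal (norm a) * p1 x \<le> ennreal (norm a) * (ennreal (norm (inverse a)) * p1 (sc a x))"
      by (intro mult_left_mono) auto
    also have "\<dots> = p1 (sc a x)"
      using False by (simp add: mult.assoc[symmetric] norm_inverse flip: ennreal_mult)
    finally show ?thesis using p1_sc_le[of a x] by (intro antisym)
  qed
  define M where "M = {x. p1 x < top}"
  have Msub: "subspace M"
    unfolding subspace_def M_def
  proof (intro conjI ballI allI; clarsimp)
    show "p1 0 < top" using p1_0 by simp
    fix x y assume "p1 x < top" "p1 y < top"
    then show "p1 (x + y) < top" using p1_add[of x y] by (metis ennreal_add_less_top le_less_trans)
  next
    fix c x assume "p1 x < top"
    then show "p1 (sc c x) < top" by (simp add: p1_sc ennreal_mult_less_top)
  qed
  obtain g where g: "range g \<subseteq> M" "\<forall>x y. g (x + y) = g x + g y" "\<forall>a x. g (sc a x) = sc a (g x)"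
    "\<forall>v\<in>M. g v = v"
    using proj_exists[OF VS, of M] Msub by blast
  define p2 where "p2 x = p1 (g x)" for x
  have "fin_seminorm sc UNIV p2"
    unfolding fin_seminorm_def ext_seminorm_def p2_def
    using g(1) by (auto simp: g(2,3) p1_sc p1_add M_def)
  moreover have "\<forall>y\<in>Y. p2 y = p y"
  proof
    fix y assume "y \<in> Y"
    then have "y \<in> M" using p1_Y pf by (simp add: M_def)
    then show "p2 y = p y" using g(4) p1_Y \<open>y \<in> Y\<close> by (simp add: p2_def)
  qed
  moreover have "\<forall>x. p2 x \<le> r x"
  proof
    fix x show "p2 x \<le> r x"
    proof (cases "r x < top")
      case True
      then have "x \<in> M" using p1_le_r[of x] by (simp add: M_def le_less_trans)
      then show ?thesis using g(4) p1_le_r by (simp add: p2_def)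
    next
      case False
      then have "r x = top" using less_top by blast
      then show ?thesis by simp
    qed
  qed
  ultimately show ?thesis by blast
qed


lemma dom_coarser:
  assumes "finite J" "J \<subseteq> P" "t > 0" "\<forall>x. p2 x \<le> ennreal t * (\<Sum>\<rho>\<in>J. \<rho> x)"
  shows "coarser (seminorm_topology UNIV {p2}) (seminorm_topology UNIV P)"
  unfolding coarser_def
proof (intro allI impI)
  fix U assume U: "openin (seminorm_topology UNIV {p2}) U"
  show "openin (seminorm_topology UNIV P) U"
    unfolding openin_st
  proof (intro conjI ballI)
    fix x0 assume "x0 \<in> U"
    then obtain J' e where J': "finite J'" "J' \<subseteq> {p2}" "(e::real) > 0"
        "{x\<in>UNIV. \<forall>\<rho>\<in>J'. \<rho> (x - x0) < ennreal e} \<subseteq> U"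
      using U unfolding openin_st by blast
    define d where "d = e / (t * (real (card J) + 1))"
    have d: "d > 0" using J'(3) assms(3) by (simp add: d_def)
    have td: "t * (real (card J) * d) < e"
    proof -
      have "t * (real (card J) * d) = e * (real (card J) / (real (card J) + 1))"
      proof -
        have nz: "t * (real (card J) + 1) \<noteq> 0" "t + t * real (card J) \<noteq> 0"
          using assms(3) by (auto simp: add_pos_nonneg) (smt (verit) mult_nonneg_nonneg of_nat_0_le_iff)
        show ?thesis unfolding d_def using nz by (simp add: field_simps)
      qed
      also have "\<dots> < e * 1" using J'(3) by (intro mult_strict_left_mono) auto
      finally show ?thesis by simp
    qed
    have "{x\<in>UNIV. \<forall>\<rho>\<in>J. \<rho> (x - x0) < ennreal d} \<subseteq> U"
    proof safe
      fix x assume x: "\<forall>\<rho>\<in>J. \<rho> (x - x0) < ennreal d"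
      have "p2 (x - x0) < ennreal e"
      proof -
        have "p2 (x - x0) \<le> ennreal t * (\<Sum>\<rho>\<in>J. \<rho> (x - x0))" using assms(4) by blast
        also have "\<dots> \<le> ennreal t * (\<Sum>\<rho>\<in>J. ennreal d)"
        proof (rule mult_left_mono)
          show "(\<Sum>\<rho>\<in>J. \<rho> (x - x0)) \<le> (\<Sum>\<rho>\<in>J. ennreal d)"
            by (rule sum_mono) (use x in \<open>auto intro: less_imp_le\<close>)
        qed simp
        also have "\<dots> = ennreal t * (of_nat (card J) * ennreal d)" by simp
        also have "\<dots> = ennreal (t * (real (card J) * d))"
          using assms(3) d by (simp add: ennreal_mult ennreal_of_nat_eq_real_of_nat)
        also have "\<dots> < ennreal e" using td J'(3) by (simp add: ennreal_lessI)
        finally show ?thesis .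
      qed
      then show "x \<in> U" using J'(2,4) by auto
    qed
    then show "\<exists>J \<epsilon>. finite J \<and> J \<subseteq> P \<and> (\<epsilon>::real) > 0 \<and>
        {x\<in>UNIV. \<forall>\<rho>\<in>J. \<rho> (x - x0) < ennreal \<epsilon>} \<subseteq> U"
      using assms(1,2) d by blast
  qed simp
qed

lemma coarser_mono_st:
  assumes "R' \<subseteq> R" shows "coarser (seminorm_topology S R') (seminorm_topology S R)"
  unfolding coarser_def
proof (intro allI impI)
  fix U assume U: "openin (seminorm_topology S R') U"
  show "openin (seminorm_topology S R) U" unfolding openin_st
  proof (intro conjI ballI)
    show "U \<subseteq> S" using U unfolding openin_st by blast
    fix x0 assume "x0 \<in> U"
    then obtain J e where J: "finite J" "J \<subseteq> R'" "(e::real) > 0"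
        "{x\<in>S. \<forall>\<rho>\<in>J. \<rho> (x - x0) < ennreal e} \<subseteq> U"
      using U unfolding openin_st by blast
    show "\<exists>J \<epsilon>. finite J \<and> J \<subseteq> R \<and> (\<epsilon>::real) > 0 \<and>
        {x\<in>S. \<forall>\<rho>\<in>J. \<rho> (x - x0) < ennreal \<epsilon>} \<subseteq> U"
      apply (rule exI[of _ J], rule exI[of _ e]) using J assms by blast
  qed
qed

lemma coarser_trans: "coarser A B \<Longrightarrow> coarser B C \<Longrightarrow> coarser A C"
  unfolding coarser_def by blast

lemma cont_coarser: "coarser A B \<Longrightarrow> topspace A = topspace B \<Longrightarrow> continuous_map A X f \<Longrightarrow> continuous_map B X f"
  unfolding continuous_map_def coarser_def by auto


lemma finest_restrict_single:
  fixes sc :: "'k::real_normed_field \<Rightarrow> 'v::ab_group_add \<Rightarrow> 'v"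
  assumes VS: "vector_space sc" and Ysub: "module.subspace sc Y"
    and P: "\<forall>\<rho>\<in>P. ext_seminorm sc UNIV \<rho>" and tau: "\<tau> = seminorm_topology UNIV P"
    and fin: "finest_lc_topology sc UNIV \<tau> \<tau>F"
    and p: "fin_seminorm sc Y p"
    and c: "coarser (seminorm_topology Y {p}) (seminorm_topology Y P)"
  shows "coarser (seminorm_topology Y {p}) (subtopology \<tau>F Y)"
proof -
  have Y0: "0 \<in> Y" using sub_zero[OF VS Ysub] .
  have Yd: "\<forall>x\<in>Y. \<forall>y\<in>Y. x - y \<in> Y" using sub_diff[OF VS Ysub] .
  have Ys: "\<And>a x. x \<in> Y \<Longrightarrow> sc a x \<in> Y"
    by (metis Ysub VS module.subspace_scale module_iff_vector_space)
  have ph: "\<And>a x. x \<in> Y \<Longrightarrow> p (sc a x) = ennreal (norm a) * p x"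
    and pt: "\<forall>x\<in>Y. \<forall>y\<in>Y. p (x + y) \<le> p x + p y"
    and pf: "\<And>x. x \<in> Y \<Longrightarrow> p x < top"
    using p unfolding fin_seminorm_def ext_seminorm_def by auto
  have p0: "p 0 = 0" using sn_zero[OF VS fin_seminorm_def[THEN iffD1, OF p, THEN conjunct1] Y0] .
  have "openin (seminorm_topology Y {p}) {x\<in>Y. \<forall>\<rho>\<in>{p}. \<rho> (x - 0) < ennreal 1}"
    by (rule nbJ_open) (use Y0 Yd pt in auto)
  then have "openin (seminorm_topology Y P) {x\<in>Y. \<forall>\<rho>\<in>{p}. \<rho> (x - 0) < ennreal 1}"
    using c unfolding coarser_def by blast
  moreover have "0 \<in> {x\<in>Y. \<forall>\<rho>\<in>{p}. \<rho> (x - 0) < ennreal 1}" using Y0 p0 by simp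
  ultimately obtain J e where J: "finite J" "J \<subseteq> P" "(e::real) > 0"
      "{x\<in>Y. \<forall>\<rho>\<in>J. \<rho> (x - 0) < ennreal e} \<subseteq> {x\<in>Y. \<forall>\<rho>\<in>{p}. \<rho> (x - 0) < ennreal 1}"
    unfolding openin_st by blast
  define q where "q x = (\<Sum>\<rho>\<in>J. \<rho> x)" for x
  have Jh: "\<And>\<rho> a x. \<rho> \<in> J \<Longrightarrow> \<rho> (sc a x) = ennreal (norm a) * \<rho> x"
    and Jt: "\<And>\<rho> x y. \<rho> \<in> J \<Longrightarrow> \<rho> (x + y) \<le> \<rho> x + \<rho> y"
    using J(2) P unfolding ext_seminorm_def by blast+
  have qh: "q (sc a x) = ennreal (norm a) * q x" for a x
    unfolding q_def by (simp add: Jh sum_distrib_left)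
  have qt: "q (x + y) \<le> q x + q y" for x y
    unfolding q_def sum.distrib[symmetric] by (rule sum_mono) (rule Jt)
  have qge: "\<rho> x \<le> q x" if "\<rho> \<in> J" for \<rho> x
    unfolding q_def by (rule member_le_sum) (use that J(1) in auto)
  have dom: "\<forall>y\<in>Y. p y \<le> ennreal (1/e) * q y"
  proof
    fix y assume y: "y \<in> Y"
    show "p y \<le> ennreal (1/e) * q y"
    proof (cases "q y = top")
      case True
      then show ?thesis using J(3) by (simp add: ennreal_mult_top)
    next
      case False
      then obtain a where a: "q y = ennreal a" "0 \<le> a"
        by (metis ennreal_cases)
      obtain b where b: "p y = ennreal b" "0 \<le> b"
        using pf[OF y] by (metis ennreal_cases less_irrefl)
      show ?thesis
      proof (rule ccontr)
        assume "\<not> p y \<le> ennreal (1/e) * q y"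
        then have "ennreal (1/e) * ennreal a < ennreal b"
          using a b by (simp add: not_le)
        then have "ennreal (1/e * a) < ennreal b"
          using J(3) a(2) by (subst ennreal_mult) auto
        then have ab: "a / e < b" using ennreal_less_iff J(3) a(2) by auto
        then have bpos: "b > 0" using a(2) J(3) by (smt (verit) divide_nonneg_pos)
        have ab2: "a / b < e" using ab bpos J(3) by (simp add: field_simps)
        define s where "s = (of_real (1/b) :: 'k)"
        have ns: "norm s = 1/b" using bpos unfolding s_def norm_of_real by simp
        have "sc s y \<in> {x\<in>Y. \<forall>\<rho>\<in>J. \<rho> (x - 0) < ennreal e}"
        proof (simp add: Ys y, intro ballI)
          fix \<rho> assume "\<rho> \<in> J"
          have "\<rho> (sc s y) = ennreal (1/b) * \<rho> y" using Jh[OF \<open>\<rho> \<in> J\<close>] ns by simp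
          also have "\<dots> \<le> ennreal (1/b) * q y" using qge[OF \<open>\<rho> \<in> J\<close>] by (intro mult_left_mono) auto
          also have "\<dots> = ennreal (a / b)" using a bpos by (simp add: ennreal_mult[symmetric])
          also have "\<dots> < ennreal e" using ab2 J(3) by (simp add: ennreal_lessI)
          finally show "\<rho> (sc s y) < ennreal e" .
        qed
        then have "p (sc s y) < 1" using J(4) by auto
        moreover have "p (sc s y) = 1" using ph[OF y] ns b bpos by (simp add: ennreal_mult[symmetric])
        ultimately show False by simp
      qed
    qed
  qed
  define r where "r x = ennreal (1/e) * q x" for x
  have r: "ext_seminorm sc UNIV r"
    unfolding ext_seminorm_def r_def
  proof (intro conjI ballI allI)
    fix a x show "ennreal (1/e) * q (sc a x) = ennreal (norm a) * (ennreal (1/e) * q x)"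
      by (simp add: qh ac_simps)
  next
    fix x y show "ennreal (1/e) * q (x + y) \<le> ennreal (1/e) * q x + ennreal (1/e) * q y"
      using qt[of x y] by (simp add: distrib_left[symmetric] mult_left_mono)
  qed
  obtain p2 where p2: "fin_seminorm sc UNIV p2" "\<forall>y\<in>Y. p2 y = p y" "\<forall>x. p2 x \<le> r x"
    using extend_seminorm[OF VS Ysub p r] dom by (auto simp: r_def)
  have "coarser (seminorm_topology UNIV {p2}) \<tau>"
    unfolding tau by (rule dom_coarser[OF J(1,2), of "1/e"]) (use J(3) p2(3) in \<open>auto simp: r_def q_def\<close>)
  moreover have "lc_topology sc UNIV (seminorm_topology UNIV {p2})"
    unfolding lc_topology_def using p2(1) by blast
  ultimately have cF: "coarser (seminorm_topology UNIV {p2}) \<tau>F"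
    using fin unfolding finest_lc_topology_def by blast
  have p2t: "\<forall>x\<in>UNIV. \<forall>y\<in>UNIV. p2 (x + y) \<le> p2 x + p2 y"
    using p2(1) unfolding fin_seminorm_def ext_seminorm_def by blast
  show ?thesis
    unfolding coarser_def
  proof (intro allI impI)
    fix U assume U: "openin (seminorm_topology Y {p}) U"
    show "openin (subtopology \<tau>F Y) U"
    proof (subst openin_subopen, intro ballI)
      fix x0 assume "x0 \<in> U"
      then obtain J' e' where J': "finite J'" "J' \<subseteq> {p}" "(e'::real) > 0"
          "{x\<in>Y. \<forall>\<rho>\<in>J'. \<rho> (x - x0) < ennreal e'} \<subseteq> U"
        using U unfolding openin_st by blast
      have x0: "x0 \<in> Y" using U \<open>x0 \<in> U\<close> unfolding openin_st by blast
      define T1 where "T1 = {x\<in>Y. p (x - x0) < ennreal e'}"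
      have T1U: "T1 \<subseteq> U" using J'(2,4) unfolding T1_def by auto
      have x0T1: "x0 \<in> T1" using x0 p0 J'(3) unfolding T1_def by simp
      have T1eq: "T1 = {x\<in>UNIV. p2 (x - x0) < ennreal e'} \<inter> Y"
        using p2(2) Yd x0 unfolding T1_def by auto
      have op: "openin \<tau>F {x\<in>UNIV. p2 (x - x0) < ennreal e'}"
        using cF nb1_open[of x0 UNIV p2 "{p2}", OF _ _ _ p2t] unfolding coarser_def by auto
      show "\<exists>T. openin (subtopology \<tau>F Y) T \<and> x0 \<in> T \<and> T \<subseteq> U"
      proof (intro exI[of _ T1] conjI)
        show "openin (subtopology \<tau>F Y) T1" unfolding openin_subtopology using T1eq op by blast
      qed (use T1U x0T1 in auto)
    qed
  qed
qed


lemma finest_restrict: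
  fixes sc :: "'k::real_normed_field \<Rightarrow> 'v::ab_group_add \<Rightarrow> 'v"
  assumes VS: "vector_space sc" and Ysub: "module.subspace sc Y"
    and P: "\<forall>\<rho>\<in>P. ext_seminorm sc UNIV \<rho>" and tau: "\<tau> = seminorm_topology UNIV P"
    and fin: "finest_lc_topology sc UNIV \<tau> \<tau>F"
    and sig: "lc_topology sc Y \<sigma>" and c: "coarser \<sigma> (seminorm_topology Y P)"
  shows "coarser \<sigma> (subtopology \<tau>F Y)"
proof -
  obtain R where R: "\<forall>\<rho>\<in>R. fin_seminorm sc Y \<rho>" "\<sigma> = seminorm_topology Y R"
    using sig unfolding lc_topology_def by blast
  obtain Q where Q: "\<tau>F = seminorm_topology UNIV Q"
    using fin unfolding finest_lc_topology_def lc_topology_def by blast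
  have Y0: "0 \<in> Y" using sub_zero[OF VS Ysub] .
  have Yd: "\<forall>x\<in>Y. \<forall>y\<in>Y. x - y \<in> Y" using sub_diff[OF VS Ysub] .
  have Rt: "\<forall>\<rho>\<in>R. \<forall>x\<in>Y. \<forall>y\<in>Y. \<rho> (x + y) \<le> \<rho> x + \<rho> y"
    using R(1) unfolding fin_seminorm_def ext_seminorm_def by blast
  have single: "coarser (seminorm_topology Y {\<rho>}) (subtopology \<tau>F Y)" if "\<rho> \<in> R" for \<rho>
  proof (rule finest_restrict_single[OF VS Ysub P tau fin])
    show "fin_seminorm sc Y \<rho>" using R(1) that by blast
    show "coarser (seminorm_topology Y {\<rho>}) (seminorm_topology Y P)"
      using coarser_trans[OF coarser_mono_st[of "{\<rho>}" R Y]] c R(2) that by blast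
  qed
  have topY: "topspace (subtopology \<tau>F Y) = Y" using Q by (simp add: topspace_st)
  show ?thesis
    unfolding coarser_def
  proof (intro allI impI)
    fix U assume U: "openin \<sigma> U"
    show "openin (subtopology \<tau>F Y) U"
    proof (subst openin_subopen, intro ballI)
      fix x0 assume "x0 \<in> U"
      then obtain J e where J: "finite J" "J \<subseteq> R" "(e::real) > 0"
          "{x\<in>Y. \<forall>\<rho>\<in>J. \<rho> (x - x0) < ennreal e} \<subseteq> U"
        using U unfolding R(2) openin_st by blast
      have x0: "x0 \<in> Y" using U \<open>x0 \<in> U\<close> unfolding R(2) openin_st by blast
      have R0: "\<forall>\<rho>\<in>R. \<rho> 0 = 0"
        using R(1) sn_zero[OF VS _ Y0] unfolding fin_seminorm_def by blast
      have x0T: "x0 \<in> {x\<in>Y. \<forall>\<rho>\<in>J. \<rho> (x - x0) < ennreal e}"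
      proof -
        have "\<forall>\<rho>\<in>J. \<rho> 0 = 0" using J(2) R0 by blast
        then show ?thesis using x0 J(3) by auto
      qed
      have opT: "openin (subtopology \<tau>F Y) {x\<in>Y. \<forall>\<rho>\<in>J. \<rho> (x - x0) < ennreal e}"
      proof (cases "J = {}")
        case True
        then show ?thesis using openin_topspace[of "subtopology \<tau>F Y"] topY by simp
      next
        case False
        have eq: "{x\<in>Y. \<forall>\<rho>\<in>J. \<rho> (x - x0) < ennreal e} = \<Inter>((\<lambda>\<rho>. {x\<in>Y. \<rho> (x - x0) < ennreal e}) ` J)"
          using False by auto
        show ?thesis unfolding eq
        proof (rule openin_Inter)
          fix T assume "T \<in> (\<lambda>\<rho>. {x\<in>Y. \<rho> (x - x0) < ennreal e}) ` J"
          then obtain \<rho> where \<rho>: "\<rho> \<in> J" "T = {x\<in>Y. \<rho> (x - x0) < ennreal e}" by blast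
          have "openin (seminorm_topology Y {\<rho>}) T"
            unfolding \<rho>(2) by (rule nb1_open) (use x0 Yd Rt \<rho>(1) J(2) in auto)
          then show "openin (subtopology \<tau>F Y) T"
            using single[of \<rho>] \<rho>(1) J(2) unfolding coarser_def by blast
        qed (use False J(1) in auto)
      qed
      show "\<exists>T. openin (subtopology \<tau>F Y) T \<and> x0 \<in> T \<and> T \<subseteq> U"
        using opT x0T J(4) by blast
    qed
  qed
qed


theorem theorem4p1:
  fixes sc :: "'k::real_normed_field \<Rightarrow> 'v::ab_group_add \<Rightarrow> 'v"
    and \<tau> \<tau>F :: "'v topology" and Y :: "'v set"
  assumes "vector_space sc"
    and "elcs_topology sc UNIV \<tau>"
    and "finest_lc_topology sc UNIV \<tau> \<tau>F"
    and "module.subspace sc Y"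
  shows "elcs_topology sc Y (subtopology \<tau> Y)
     \<and> finest_lc_topology sc Y (subtopology \<tau> Y) (subtopology \<tau>F Y)
     \<and> dual_space sc Y (subtopology \<tau>F Y) = dual_space sc Y (subtopology \<tau> Y)"
proof -
  note VS = assms(1) and fin = assms(3) and Ysub = assms(4)
  obtain P where P: "\<forall>\<rho>\<in>P. ext_seminorm sc UNIV \<rho>" and tau: "\<tau> = seminorm_topology UNIV P"
    using assms(2) unfolding elcs_topology_def by blast
  obtain Q where Q: "\<forall>\<rho>\<in>Q. fin_seminorm sc UNIV \<rho>" and tauF: "\<tau>F = seminorm_topology UNIV Q"
    using fin unfolding finest_lc_topology_def lc_topology_def by blast
  have Y0: "0 \<in> Y" using sub_zero[OF VS Ysub] .
  have Yd: "\<forall>x\<in>Y. \<forall>y\<in>Y. x - y \<in> Y" using sub_diff[OF VS Ysub] .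
  have P0: "\<forall>\<rho>\<in>P. \<rho> 0 = 0" using P sn_zero[OF VS, of UNIV] by blast
  have Q0: "\<forall>\<rho>\<in>Q. \<rho> 0 = 0" using Q sn_zero[OF VS, of UNIV] unfolding fin_seminorm_def by blast
  have Pt: "\<forall>\<rho>\<in>P. \<forall>x\<in>UNIV. \<forall>y\<in>UNIV. \<rho> (x + y) \<le> \<rho> x + \<rho> y"
    using P unfolding ext_seminorm_def by blast
  have Qt: "\<forall>\<rho>\<in>Q. \<forall>x\<in>UNIV. \<forall>y\<in>UNIV. \<rho> (x + y) \<le> \<rho> x + \<rho> y"
    using Q unfolding fin_seminorm_def ext_seminorm_def by blast
  have subP: "subtopology \<tau> Y = seminorm_topology Y P"
    unfolding tau by (rule sub_st) (use Yd P0 Pt in auto)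
  have subQ: "subtopology \<tau>F Y = seminorm_topology Y Q"
    unfolding tauF by (rule sub_st) (use Yd Q0 Qt in auto)
  have A: "elcs_topology sc Y (subtopology \<tau> Y)"
    unfolding elcs_topology_def subP
    by (rule exI[of _ P]) (use P in \<open>auto simp: ext_seminorm_def\<close>)
  have cFt: "coarser \<tau>F \<tau>" using fin unfolding finest_lc_topology_def by blast
  have cFtY: "coarser (subtopology \<tau>F Y) (subtopology \<tau> Y)"
    using cFt unfolding coarser_def openin_subtopology by blast
  have B: "finest_lc_topology sc Y (subtopology \<tau> Y) (subtopology \<tau>F Y)"
    unfolding finest_lc_topology_def
  proof (intro conjI allI impI)
    show "lc_topology sc Y (subtopology \<tau>F Y)"
      unfolding lc_topology_def subQ
      by (rule exI[of _ Q]) (use Q in \<open>auto simp: fin_seminorm_def ext_seminorm_def\<close>)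
    show "coarser (subtopology \<tau>F Y) (subtopology \<tau> Y)" by (rule cFtY)
    fix \<sigma> assume "lc_topology sc Y \<sigma> \<and> coarser \<sigma> (subtopology \<tau> Y)"
    then show "coarser \<sigma> (subtopology \<tau>F Y)"
      using finest_restrict[OF VS Ysub P tau fin] subP by auto
  qed
  have topY: "topspace (subtopology \<tau> Y) = Y" "topspace (subtopology \<tau>F Y) = Y"
    using tau tauF by (simp_all add: topspace_st)
  have C: "dual_space sc Y (subtopology \<tau>F Y) = dual_space sc Y (subtopology \<tau> Y)"
  proof (rule set_eqI)
    fix f :: "'v \<Rightarrow> 'k"
    show "f \<in> dual_space sc Y (subtopology \<tau>F Y) \<longleftrightarrow> f \<in> dual_space sc Y (subtopology \<tau> Y)"
      unfolding dual_space_def mem_Collect_eq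
    proof (intro iffI; elim conjE; intro conjI)
      assume "continuous_map (subtopology \<tau>F Y) euclidean f"
      then show "continuous_map (subtopology \<tau> Y) euclidean f"
        using cont_coarser[OF cFtY] topY by simp
    next
      assume fadd: "\<forall>x\<in>Y. \<forall>y\<in>Y. f (x + y) = f x + f y"
        and fsc: "\<forall>a. \<forall>x\<in>Y. f (sc a x) = a * f x"
        and fc: "continuous_map (subtopology \<tau> Y) euclidean f"
      have fd: "f (x - x0) = f x - f x0" if "x \<in> Y" "x0 \<in> Y" for x x0
      proof -
        have "f x = f ((x - x0) + x0)" by simp
        also have "\<dots> = f (x - x0) + f x0" using fadd Yd that by blast
        finally show ?thesis by (simp add: algebra_simps)
      qed
      define p where "p y = ennreal (norm (f y))" for y
      have pfin: "fin_seminorm sc Y p"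
        unfolding fin_seminorm_def ext_seminorm_def p_def
      proof (intro conjI ballI allI)
        fix a x assume "x \<in> Y"
        then show "ennreal (norm (f (sc a x))) = ennreal (norm a) * ennreal (norm (f x))"
          using fsc by (simp add: norm_mult ennreal_mult)
      next
        fix x y assume "x \<in> Y" "y \<in> Y"
        then show "ennreal (norm (f (x + y))) \<le> ennreal (norm (f x)) + ennreal (norm (f y))"
          using fadd by (simp add: norm_triangle_ineq flip: ennreal_plus)
      qed simp
      have ball_eq: "x \<in> Y \<Longrightarrow> x0 \<in> Y \<Longrightarrow> (p (x - x0) < ennreal e) \<longleftrightarrow> f x \<in> ball (f x0) e" for x x0 e
        using fd by (simp add: p_def dist_norm norm_minus_commute ennreal_less_iff)
      have c1: "coarser (seminorm_topology Y {p}) (seminorm_topology Y P)"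
        unfolding coarser_def subP[symmetric]
      proof (intro allI impI)
        fix U assume U: "openin (seminorm_topology Y {p}) U"
        show "openin (subtopology \<tau> Y) U"
        proof (subst openin_subopen, intro ballI)
          fix x0 assume "x0 \<in> U"
          then obtain J e where J: "finite J" "J \<subseteq> {p}" "(e::real) > 0"
              "{x\<in>Y. \<forall>\<rho>\<in>J. \<rho> (x - x0) < ennreal e} \<subseteq> U"
            using U unfolding openin_st by blast
          have x0: "x0 \<in> Y" using U \<open>x0 \<in> U\<close> unfolding openin_st by blast
          define T where "T = {x \<in> topspace (subtopology \<tau> Y). f x \<in> ball (f x0) e}"
          have "openin (subtopology \<tau> Y) T"
            unfolding T_def by (rule openin_continuous_map_preimage[OF fc]) simp
          moreover have "x0 \<in> T" using x0 J(3) topY by (simp add: T_def)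
          moreover have "T \<subseteq> U"
          proof
            fix x assume "x \<in> T"
            then have "x \<in> Y" "f x \<in> ball (f x0) e" using topY by (auto simp: T_def)
            then have "x \<in> {x\<in>Y. \<forall>\<rho>\<in>J. \<rho> (x - x0) < ennreal e}"
              using ball_eq[OF _ x0] J(2) by auto
            then show "x \<in> U" using J(4) by blast
          qed
          ultimately show "\<exists>T. openin (subtopology \<tau> Y) T \<and> x0 \<in> T \<and> T \<subseteq> U" by blast
        qed
      qed
      have c2: "coarser (seminorm_topology Y {p}) (subtopology \<tau>F Y)"
        by (rule finest_restrict_single[OF VS Ysub P tau fin pfin c1])
      have fcp: "continuous_map (seminorm_topology Y {p}) euclidean f"
        unfolding continuous_map_def topspace_st
      proof (intro conjI allI impI)
        show "f \<in> Y \<rightarrow> topspace euclidean" by simp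
        fix V :: "'k set" assume "openin euclidean V"
        then have V: "open V" by simp
        show "openin (seminorm_topology Y {p}) {x \<in> Y. f x \<in> V}"
          unfolding openin_st
        proof (intro conjI ballI)
          fix x0 assume x0: "x0 \<in> {x \<in> Y. f x \<in> V}"
          then obtain e where e: "e > 0" "ball (f x0) e \<subseteq> V"
            using V open_contains_ball by blast
          have "{x\<in>Y. \<forall>\<rho>\<in>{p}. \<rho> (x - x0) < ennreal e} \<subseteq> {x \<in> Y. f x \<in> V}"
            using ball_eq[of _ x0 e] x0 e(2) by auto
          then show "\<exists>J \<epsilon>. finite J \<and> J \<subseteq> {p} \<and> (\<epsilon>::real) > 0 \<and>
              {x\<in>Y. \<forall>\<rho>\<in>J. \<rho> (x - x0) < ennreal \<epsilon>} \<subseteq> {x \<in> Y. f x \<in> V}"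
            using e(1) by blast
        qed auto
      qed
      show "continuous_map (subtopology \<tau>F Y) euclidean f"
        by (rule cont_coarser[OF c2 _ fcp]) (simp only: topY(2) topspace_st)
    qed auto
  qed
  show ?thesis using A B C by blast
qed

end
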